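(* In the setting below, assume $Z_1(1)\in\overline{\mathsf{Q}_1}$ and $Z_2(1)\in\overline{\mathsf{Q}_4}$, and define $\widetilde Z_1(t)=(|Z_{1x}(t)|,|Z_{1y}(t)|)$, $\widetilde Z_2(t)=(|Z_{2x}(t)|,-|Z_{2y}(t)|)$ for $t\in[0,1]$. Then for every $t\in(0,1]$, \[U(Z_1(t),Z_2(t))\ge U(\widetilde Z_1(t),\widetilde Z_2(t)),\] where $U(Z_1,Z_2)=\frac{1}{|Z_1|}+\frac{1}{|Z_2+\frac12Z_1|}+\frac{1}{|Z_2-\frac12Z_1|}$, and equality holds if and only if $Z_1(t)$ and $Z_2(t)$ lie in two adjacent closed quadrants respectively.
   Context: Planar three-body problem with masses $m_1=m_2=m_3=1$, $\chi=\{q=(q_1,q_2,q_3)\in(\mathbb{R}^2)^3: q_1+q_2+q_3=0\}$, action $\mathcal{A}(q)=\int_0^1\big(\tfrac12\sum|\dot q_i|^2+\sum_{i<j}\frac{1}{|q_i-q_j|}\big)dt$. Let $Q_{S_4}=\{q: q_1=q_2=(-a_2,0),\ q_3=(2a_2,0),\ a_2\ge0\}$ and $Q_{E_1}=\{q: q_1=(0,-2b_1),\ q_2=(-b_2,b_1),\ q_3=(b_2,b_1),\ b_1,b_2\in\mathbb{R}\}$. Let $q$ minimize $\mathcal{A}$ over $\{q\in H^1([0,1],\chi): q(0)\in Q_{S_4},\ q(1)\in Q_{E_1}\}$. Jacobi coordinates: $Z_1=q_1-q_2=(Z_{1x},Z_{1y})$, $Z_2=q_3-\frac{q_1+q_2}{2}=(Z_{2x},Z_{2y})$;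 in these coordinates $\mathcal{A}=\int_0^1\big(\tfrac14|\dot Z_1|^2+\tfrac13|\dot Z_2|^2+U(Z_1,Z_2)\big)dt$. Standing facts/assumptions: the minimizer is collision-free for $t\in(0,1]$ (so $Z_1(t)\neq0$ there and it solves Newton's equations), $Z_1(0)=0$, and $Z_2(0)=(3a_2,0)$ with $a_2>0$. $\mathsf{Q}_i$ denotes the open $i$-th quadrant of the $xy$-plane and $\overline{\mathsf{Q}_i}$ its closure; two quadrants are adjacent if they share a half-axis. *)

theory Defs
  imports "HOL-Analysis.Analysis"
begin

(* Points of the plane R^2 are represented as complex numbers: (x,y) ~ Complex x y. *)

definition weak_deriv :: "(real \<Rightarrow> complex) \<Rightarrow> (real \<Rightarrow> complex) \<Rightarrow> bool" where
  "weak_deriv f g \<longleftrightarrow> g integrable_on {0..1} \<and>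
      (\<forall>t\<in>{0..1}. f t = f 0 + integral {0..t} g)"

definition H1 :: "(real \<Rightarrow> complex) \<Rightarrow> bool" where
  "H1 f \<longleftrightarrow> (\<exists>g. weak_deriv f g \<and> (\<lambda>t. (norm (g t))\<^sup>2) integrable_on {0..1})"

definition wderiv :: "(real \<Rightarrow> complex) \<Rightarrow> real \<Rightarrow> complex" where
  "wderiv f = (SOME g. weak_deriv f g \<and> (\<lambda>t. (norm (g t))\<^sup>2) integrable_on {0..1})"

definition invd :: "complex \<Rightarrow> ennreal" where
  "invd z = (if z = 0 then \<infinity> else ennreal (1 / norm z))"

definition action :: "(real \<Rightarrow> complex) \<Rightarrow> (real \<Rightarrow> complex) \<Rightarrow> (real \<Rightarrow> complex) \<Rightarrow> ennreal" where
  "action q1 q2 q3 = (\<integral>\<^sup>+ t\<in>{0..1}.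
      ennreal (1/2 * ((norm (wderiv q1 t))\<^sup>2 + (norm (wderiv q2 t))\<^sup>2 + (norm (wderiv q3 t))\<^sup>2))
      + invd (q1 t - q2 t) + invd (q1 t - q3 t) + invd (q2 t - q3 t) \<partial>lebesgue)"

definition Q_S4 :: "(complex \<times> complex \<times> complex) set" where
  "Q_S4 = {(p1, p2, p3). \<exists>a2::real. a2 \<ge> 0 \<and> p1 = Complex (-a2) 0 \<and> p2 = Complex (-a2) 0
                                      \<and> p3 = Complex (2*a2) 0}"

definition Q_E1 :: "(complex \<times> complex \<times> complex) set" where
  "Q_E1 = {(p1, p2, p3). \<exists>b1 b2::real. p1 = Complex 0 (-2*b1) \<and> p2 = Complex (-b2) b1
                                      \<and> p3 = Complex b2 b1}"

definition admissible :: "(real \<Rightarrow> complex) \<Rightarrow> (real \<Rightarrow> complex) \<Rightarrow> (real \<Rightarrow> complex) \<Rightarrow> bool" where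
  "admissible q1 q2 q3 \<longleftrightarrow> H1 q1 \<and> H1 q2 \<and> H1 q3 \<and>
     (\<forall>t\<in>{0..1}. q1 t + q2 t + q3 t = 0) \<and>
     (q1 0, q2 0, q3 0) \<in> Q_S4 \<and> (q1 1, q2 1, q3 1) \<in> Q_E1"

definition action_minimizer :: "(real \<Rightarrow> complex) \<Rightarrow> (real \<Rightarrow> complex) \<Rightarrow> (real \<Rightarrow> complex) \<Rightarrow> bool" where
  "action_minimizer q1 q2 q3 \<longleftrightarrow> admissible q1 q2 q3 \<and>
     (\<forall>p1 p2 p3. admissible p1 p2 p3 \<longrightarrow> action q1 q2 q3 \<le> action p1 p2 p3)"

(* potential in Jacobi coordinates *)
definition U :: "complex \<Rightarrow> complex \<Rightarrow> real" where
  "U Z1 Z2 = 1 / norm Z1 + 1 / norm (Z2 + Z1 / 2) + 1 / norm (Z2 - Z1 / 2)"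

definition quadrant :: "nat \<Rightarrow> complex set" where
  "quadrant i = (if i = 1 then {z. Re z > 0 \<and> Im z > 0}
                 else if i = 2 then {z. Re z < 0 \<and> Im z > 0}
                 else if i = 3 then {z. Re z < 0 \<and> Im z < 0}
                 else if i = 4 then {z. Re z > 0 \<and> Im z < 0}
                 else {})"

definition adjacent_quadrants :: "nat \<Rightarrow> nat \<Rightarrow> bool" where
  "adjacent_quadrants i j \<longleftrightarrow> i \<in> {1..4} \<and> j \<in> {1..4} \<and>
     (j = i mod 4 + 1 \<or> i = j mod 4 + 1)"

end

theory Submission
  imports Defs
begin

lemma closure_quad:
  fixes sx sy :: real assumes "sx = 1 \<or> sx = -1" "sy = 1 \<or> sy = -1"
  shows "closure {z::complex. sx * Re z > 0 \<and> sy * Im z > 0} = {z. sx * Re z \<ge> 0 \<and> sy * Im z \<ge> 0}"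
proof
  have "closed {z::complex. sx * Re z \<ge> 0 \<and> sy * Im z \<ge> 0}"
    by (intro closed_Collect_conj closed_Collect_le continuous_intros)
  then show "closure {z::complex. sx * Re z > 0 \<and> sy * Im z > 0} \<subseteq> {z. sx * Re z \<ge> 0 \<and> sy * Im z \<ge> 0}"
    by (intro closure_minimal) auto
next
  show "{z. sx * Re z \<ge> 0 \<and> sy * Im z \<ge> 0} \<subseteq> closure {z::complex. sx * Re z > 0 \<and> sy * Im z > 0}"
  proof
    fix z :: complex assume z: "z \<in> {z. sx * Re z \<ge> 0 \<and> sy * Im z \<ge> 0}"
    show "z \<in> closure {z::complex. sx * Re z > 0 \<and> sy * Im z > 0}"
      unfolding closure_approachable
    proof (intro allI impI)
      fix e :: real assume e: "e > 0"
      define y where "y = z + Complex (sx * e/4) (sy * e/4)"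
      have "sx * sx = 1" "sy * sy=1" using assms by auto
      hence "sx * Re y > 0 \<and> sy * Im y > 0" using z e unfolding y_def by (auto simp: algebra_simps)
      moreover have "dist y z < e"
      proof -
        have "dist y z = cmod (Complex (sx * e/4) (sy * e/4))" unfolding y_def by (simp add: dist_norm)
        also have "\<dots> \<le> \<bar>sx * e/4\<bar> + \<bar>sy * e/4\<bar>" using cmod_le[of "Complex (sx * e/4) (sy * e/4)"] by simp
        also have "\<dots> < e" using assms e by auto
        finally show ?thesis .
      qed
      ultimately show "\<exists>y\<in>{z::complex. sx * Re z > 0 \<and> sy * Im z > 0}. dist y z < e" by blast
    qed
  qed
qed

lemma ineq:
  fixes u v uu vv :: real
  assumes pos: "u > 0" "v > 0" "uu > 0" "vv > 0"
    and K: "u^2 + v^2 = uu^2 + vv^2" and p: "u* v \<le> uu* vv"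
  shows "1/uu + 1/vv \<le> 1/u + 1/v" and "u* v < uu* vv \<Longrightarrow> 1/uu + 1/vv < 1/u + 1/v"
    and "u* v = uu* vv \<Longrightarrow> 1/uu + 1/vv = 1/u + 1/v"
proof -
  define k where "k = u^2+v^2"
  define P where "P = u* v"
  define Q where "Q = uu* vv"
  have P: "P > 0" "Q > 0" using pos by (auto simp: P_def Q_def)
  have e1: "(1/u+1/v)^2 = (k + 2*P)/P^2" unfolding k_def P_def using pos
    by (simp add: field_simps power2_eq_square)
  have e2: "(1/uu+1/vv)^2 = (k + 2*Q)/Q^2" unfolding k_def Q_def using pos K
    by (simp add: field_simps power2_eq_square)
  have kp: "k > 0" unfolding k_def using pos by (simp add: add_pos_pos)
  have key: "(k + 2*Q)/Q^2 \<le> (k + 2*P)/P^2" and key2: "P < Q \<Longrightarrow> (k + 2*Q)/Q^2 < (k + 2*P)/P^2"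
  proof -
    have PQ: "P \<le> Q" using p P_def Q_def by simp
    have d: "(k + 2*P)*Q^2 - (k + 2*Q)*P^2 = k*(Q^2-P^2) + 2*P*Q*(Q-P)"
      by (simp add: algebra_simps power2_eq_square)
    have "0 \<le> k*(Q^2-P^2) + 2*P*Q*(Q-P)"
      using PQ P kp by (intro add_nonneg_nonneg mult_nonneg_nonneg) (auto intro: power_mono)
    then show "(k + 2*Q)/Q^2 \<le> (k + 2*P)/P^2" using P d by (simp add: divide_simps)
    assume "P < Q"
    hence "0 < k*(Q^2-P^2) + 2*P*Q*(Q-P)"
      using P kp by (intro add_pos_pos mult_pos_pos) (auto intro: power_strict_mono)
    then show "(k + 2*Q)/Q^2 < (k + 2*P)/P^2" using P d by (simp add: divide_simps)
  qed
  have n: "0 \<le> 1/uu+1/vv" "0 \<le> 1/u+1/v" using pos by auto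
  show "1/uu + 1/vv \<le> 1/u + 1/v"
    using key e1 e2 n by (metis power2_le_imp_le)
  show "u* v < uu* vv \<Longrightarrow> 1/uu + 1/vv < 1/u + 1/v"
    using key2 e1 e2 n P_def Q_def by (metis power_less_imp_less_base)
  assume "u* v = uu* vv"
  hence "P = Q" using P_def Q_def by simp
  hence "(1/uu + 1/vv)^2 = (1/u + 1/v)^2" using e1 e2 by simp
  then show "1/uu + 1/vv = 1/u + 1/v" using n by (simp add: power2_eq_iff_nonneg)
qed

lemma sgn_cases:
  fixes a b c d :: real
  shows "(a*c)*(b*d) \<le> 0 \<longleftrightarrow>
    ((a\<ge>0\<and>b\<ge>0) \<and> (c\<le>0\<and>d\<ge>0) \<or> (a\<le>0\<and>b\<ge>0) \<and> (c\<ge>0\<and>d\<ge>0) \<or>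
     (a\<le>0\<and>b\<ge>0) \<and> (c\<le>0\<and>d\<le>0) \<or> (a\<le>0\<and>b\<le>0) \<and> (c\<le>0\<and>d\<ge>0) \<or>
     (a\<le>0\<and>b\<le>0) \<and> (c\<ge>0\<and>d\<le>0) \<or> (a\<ge>0\<and>b\<le>0) \<and> (c\<le>0\<and>d\<le>0) \<or>
     (a\<ge>0\<and>b\<le>0) \<and> (c\<ge>0\<and>d\<ge>0) \<or> (a\<ge>0\<and>b\<ge>0) \<and> (c\<ge>0\<and>d\<le>0))"
  by (cases "a \<ge> 0"; cases "b \<ge> 0"; cases "c \<ge> 0"; cases "d \<ge> 0")
     (auto simp: mult_le_0_iff zero_le_mult_iff)

lemma cq1: "closure (quadrant 1) = {z. Re z \<ge> 0 \<and> Im z \<ge> 0}"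
  using closure_quad[of 1 1] by (simp add: quadrant_def)
lemma cq2: "closure (quadrant 2) = {z. Re z \<le> 0 \<and> Im z \<ge> 0}"
proof -
  have "quadrant 2 = {z. -1 * Re z > 0 \<and> 1 * Im z > 0}" by (auto simp: quadrant_def)
  then show ?thesis using closure_quad[of "-1" 1] by simp
qed
lemma cq3: "closure (quadrant 3) = {z. Re z \<le> 0 \<and> Im z \<le> 0}"
proof -
  have "quadrant 3 = {z. -1 * Re z > 0 \<and> -1 * Im z > 0}" by (auto simp: quadrant_def)
  then show ?thesis using closure_quad[of "-1" "-1"] by simp
qed
lemma cq4: "closure (quadrant 4) = {z. Re z \<ge> 0 \<and> Im z \<le> 0}"
proof -
  have "quadrant 4 = {z. 1 * Re z > 0 \<and> -1 * Im z > 0}" by (auto simp: quadrant_def)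
  then show ?thesis using closure_quad[of "1" "-1"] by simp
qed

lemma adj_facts: "adjacent_quadrants 1 2" "adjacent_quadrants 2 1" "adjacent_quadrants 2 3"
  "adjacent_quadrants 3 2" "adjacent_quadrants 3 4" "adjacent_quadrants 4 3"
  "adjacent_quadrants 4 1" "adjacent_quadrants 1 4"
  by (simp_all add: adjacent_quadrants_def)

lemma adj_cases: "adjacent_quadrants i j \<Longrightarrow>
  (i,j) \<in> {(1,2),(2,1),(2,3),(3,2),(3,4),(4,3),(4,1),(1,4)}"
proof -
  assume h: "adjacent_quadrants i j"
  have "i \<in> {1,2,3,4}" "j \<in> {1,2,3,4}" using h by (auto simp: adjacent_quadrants_def)
  then show ?thesis using h by (auto simp: adjacent_quadrants_def)
qed

lemma ex_adj:
  "(\<exists>i j. adjacent_quadrants i j \<and> P i \<and> Q j) \<longleftrightarrow>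
   (P 1 \<and> Q 2 \<or> P 2 \<and> Q 1 \<or> P 2 \<and> Q 3 \<or> P 3 \<and> Q 2 \<or> P 3 \<and> Q 4 \<or> P 4 \<and> Q 3 \<or> P 4 \<and> Q 1 \<or> P 1 \<and> Q 4)"
proof
  assume "\<exists>i j. adjacent_quadrants i j \<and> P i \<and> Q j"
  then obtain i j where h: "adjacent_quadrants i j" "P i" "Q j" by blast
  show "P 1 \<and> Q 2 \<or> P 2 \<and> Q 1 \<or> P 2 \<and> Q 3 \<or> P 3 \<and> Q 2 \<or> P 3 \<and> Q 4 \<or> P 4 \<and> Q 3 \<or> P 4 \<and> Q 1 \<or> P 1 \<and> Q 4"
    using adj_cases[OF h(1)] h(2,3) by auto
next
  assume "P 1 \<and> Q 2 \<or> P 2 \<and> Q 1 \<or> P 2 \<and> Q 3 \<or> P 3 \<and> Q 2 \<or> P 3 \<and> Q 4 \<or> P 4 \<and> Q 3 \<or> P 4 \<and> Q 1 \<or> P 1 \<and> Q 4"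
  then show "\<exists>i j. adjacent_quadrants i j \<and> P i \<and> Q j"
    using adj_facts by blast
qed

theorem lemma5p4:
  fixes q1 q2 q3 :: "real \<Rightarrow> complex"
  defines "Z1 \<equiv> \<lambda>t. q1 t - q2 t"
    and "Z2 \<equiv> \<lambda>t. q3 t - (q1 t + q2 t) / 2"
    and "Z1t \<equiv> \<lambda>t. Complex \<bar>Re (q1 t - q2 t)\<bar> \<bar>Im (q1 t - q2 t)\<bar>"
    and "Z2t \<equiv> \<lambda>t. Complex \<bar>Re (q3 t - (q1 t + q2 t) / 2)\<bar> (- \<bar>Im (q3 t - (q1 t + q2 t) / 2)\<bar>)"
  assumes min: "action_minimizer q1 q2 q3"
    and collision_free: "\<forall>t\<in>{0<..1}. q1 t \<noteq> q2 t \<and> q1 t \<noteq> q3 t \<and> q2 t \<noteq> q3 t"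
    and Z1_0: "Z1 0 = 0"
    and Z2_0: "\<exists>a2::real. a2 > 0 \<and> Z2 0 = Complex (3 * a2) 0"
    and Z1_1: "Z1 1 \<in> closure (quadrant 1)"
    and Z2_1: "Z2 1 \<in> closure (quadrant 4)"
  shows "\<forall>t\<in>{0<..1}.
           U (Z1 t) (Z2 t) \<ge> U (Z1t t) (Z2t t) \<and>
           (U (Z1 t) (Z2 t) = U (Z1t t) (Z2t t) \<longleftrightarrow>
              (\<exists>i j. adjacent_quadrants i j \<and> Z1 t \<in> closure (quadrant i)
                                            \<and> Z2 t \<in> closure (quadrant j)))"
proof
  fix t :: real assume t: "t \<in> {0<..1}"
  define a where "a = Re (Z1 t)"
  define b where "b = Im (Z1 t)"
  define c where "c = Re (Z2 t)"
  define d where "d = Im (Z2 t)"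
  have Z1e: "Z1 t = Complex a b" unfolding a_def b_def by simp
  have Z2e: "Z2 t = Complex c d" unfolding c_def d_def by simp
  have Z1te: "Z1t t = Complex \<bar>a\<bar> \<bar>b\<bar>" unfolding a_def b_def Z1t_def Z1_def by simp
  have Z2te: "Z2t t = Complex \<bar>c\<bar> (-\<bar>d\<bar>)" unfolding c_def d_def Z2t_def Z2_def by simp
  have nz1: "Z1 t \<noteq> 0" using collision_free t unfolding Z1_def by auto
  have nzA: "Z2 t + Z1 t / 2 \<noteq> 0"
  proof -
    have "Z2 t + Z1 t / 2 = q3 t - q2 t" unfolding Z1_def Z2_def by (simp add: field_simps)
    moreover have "q2 t \<noteq> q3 t" using collision_free t by blast
    ultimately show ?thesis by simp
  qed
  have nzB: "Z2 t - Z1 t / 2 \<noteq> 0"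
  proof -
    have "Z2 t - Z1 t / 2 = q3 t - q1 t" unfolding Z1_def Z2_def by (simp add: field_simps)
    moreover have "q1 t \<noteq> q3 t" using collision_free t by blast
    ultimately show ?thesis by simp
  qed
  define u where "u = norm (Z2 t + Z1 t / 2)"
  define v where "v = norm (Z2 t - Z1 t / 2)"
  define uu where "uu = norm (Z2t t + Z1t t / 2)"
  define vv where "vv = norm (Z2t t - Z1t t / 2)"
  define S where "S = a^2/4 + b^2/4 + c^2 + d^2"
  define X where "X = a*c + b*d"
  define Y where "Y = \<bar>a\<bar>*\<bar>c\<bar> - \<bar>b\<bar>*\<bar>d\<bar>"
  have u2: "u^2 = S + X" unfolding u_def S_def X_def cmod_power2 Z1e Z2e
    by (simp add: power2_eq_square algebra_simps)
  have v2: "v^2 = S - X" unfolding v_def S_def X_def cmod_power2 Z1e Z2e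
    by (simp add: power2_eq_square algebra_simps)
  have uu2: "uu^2 = S + Y" unfolding uu_def S_def Y_def cmod_power2 Z1te Z2te
    by (simp add: power2_eq_square algebra_simps abs_mult_self_eq)
  have vv2: "vv^2 = S - Y" unfolding vv_def S_def Y_def cmod_power2 Z1te Z2te
    by (simp add: power2_eq_square algebra_simps abs_mult_self_eq)
  have up: "u > 0" "v > 0" using nzA nzB unfolding u_def v_def by auto
  have XY: "Y^2 \<le> X^2"
  proof -
    have "X^2 - Y^2 = 2*((a*c)*(b*d) + \<bar>(a*c)*(b*d)\<bar>)"
      unfolding X_def Y_def by (simp add: power2_eq_square algebra_simps abs_mult abs_mult_self_eq)
    then show ?thesis by simp
  qed
  have XYeq: "Y^2 = X^2 \<longleftrightarrow> (a*c)*(b*d) \<le> 0"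
  proof -
    have "X^2 - Y^2 = 2*((a*c)*(b*d) + \<bar>(a*c)*(b*d)\<bar>)"
      unfolding X_def Y_def by (simp add: power2_eq_square algebra_simps abs_mult abs_mult_self_eq)
    then show ?thesis by (smt (verit))
  qed
  have prod1: "(u * v)^2 = S^2 - X^2"
  proof -
    have "(u * v)^2 = u^2 * v^2" by (simp add: power_mult_distrib)
    also have "\<dots> = (S+X)*(S-X)" using u2 v2 by simp
    finally show ?thesis by (simp add: power2_eq_square algebra_simps)
  qed
  have prod2: "(uu * vv)^2 = S^2 - Y^2"
  proof -
    have "(uu * vv)^2 = uu^2 * vv^2" by (simp add: power_mult_distrib)
    also have "\<dots> = (S+Y)*(S-Y)" using uu2 vv2 by simp
    finally show ?thesis by (simp add: power2_eq_square algebra_simps)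
  qed
  note prod = prod1 prod2
  have uvp: "u * v > 0" using up by simp
  have uuvv: "uu* vv \<ge> u * v"
  proof -
    have "(u * v)^2 \<le> (uu* vv)^2" using prod XY by simp
    moreover have "0 \<le> uu* vv" unfolding uu_def vv_def by simp
    ultimately show ?thesis by (rule power2_le_imp_le)
  qed
  have upp: "uu > 0" "vv > 0"
  proof -
    have "uu \<ge> 0" "vv \<ge> 0" unfolding uu_def vv_def by auto
    moreover have "uu * vv > 0" using uuvv uvp by linarith
    ultimately show "uu > 0" "vv > 0" by (auto simp: zero_less_mult_iff)
  qed
  have K: "u^2 + v^2 = uu^2 + vv^2" using u2 v2 uu2 vv2 by simp
  have n1: "norm (Z1 t) = norm (Z1t t)" unfolding Z1e Z1te by (simp add: cmod_def)
  have Ue: "U (Z1 t) (Z2 t) = 1 / norm (Z1 t) + (1/u + 1/v)"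
    unfolding U_def u_def v_def by simp
  have Ute: "U (Z1t t) (Z2t t) = 1 / norm (Z1 t) + (1/uu + 1/vv)"
    unfolding U_def uu_def vv_def n1 by simp
  note I = ineq[OF up upp K uuvv]
  show "U (Z1 t) (Z2 t) \<ge> U (Z1t t) (Z2t t) \<and>
           (U (Z1 t) (Z2 t) = U (Z1t t) (Z2t t) \<longleftrightarrow>
              (\<exists>i j. adjacent_quadrants i j \<and> Z1 t \<in> closure (quadrant i)
                                            \<and> Z2 t \<in> closure (quadrant j)))"
  proof
    show "U (Z1 t) (Z2 t) \<ge> U (Z1t t) (Z2t t)" using I(1) Ue Ute by simp
    have "U (Z1 t) (Z2 t) = U (Z1t t) (Z2t t) \<longleftrightarrow> u * v = uu* vv"
    proof
      assume "U (Z1 t) (Z2 t) = U (Z1t t) (Z2t t)"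
      then show "u * v = uu* vv" using I(2) uuvv Ue Ute by fastforce
    next
      assume e: "u * v = uu* vv"
      have "1/u+1/v = 1/uu+1/vv" using I(3)[OF e] by simp
      then show "U (Z1 t) (Z2 t) = U (Z1t t) (Z2t t)" using Ue Ute by simp
    qed
    also have "\<dots> \<longleftrightarrow> (u * v)^2 = (uu* vv)^2"
      using uvp upp by (simp add: power2_eq_iff_nonneg)
    also have "\<dots> \<longleftrightarrow> (a*c)*(b*d) \<le> 0" using prod XYeq by auto
    also have "\<dots> \<longleftrightarrow> (\<exists>i j. adjacent_quadrants i j \<and> Z1 t \<in> closure (quadrant i)
                                            \<and> Z2 t \<in> closure (quadrant j))"
      unfolding ex_adj[where P="\<lambda>i. Z1 t \<in> closure (quadrant i)" and Q="\<lambda>j. Z2 t \<in> closure (quadrant j)"]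
      unfolding cq1 cq2 cq3 cq4 sgn_cases Z1e Z2e by simp
    finally show "U (Z1 t) (Z2 t) = U (Z1t t) (Z2t t) \<longleftrightarrow>
              (\<exists>i j. adjacent_quadrants i j \<and> Z1 t \<in> closure (quadrant i)
                                            \<and> Z2 t \<in> closure (quadrant j))" .
  qed
qed

end
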